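(* Let $\Sigma$ be a finite alphabet and let $L\subseteq\Sigma^*$ be the language of unique Eulerian trails. Let $L''\subseteq\Sigma^*$ be the set of words $r$ of one of the two forms (a) $r=axbzayb$ with $a,b\in\Sigma$, $a\neq b$, $x,y,z\in\Sigma^*$, or (b) $r=axaya$ with $a\in\Sigma$, $x,y\in\Sigma^*$ (and $z=\epsilon$ in the conditions below), satisfying: (1) $x\neq\epsilon$ or $y\neq\epsilon$; (2) $x,y,z\in L$; (3) none of $x,y,z$ contains the letter $a$ or the letter $b$, and no two of $x,y,z$ contain a common letter. Then $L''$ equals the set of minimal forbidden words of $L$.
   Context: For a word $t=t_1\cdots t_n$ over $\Sigma$ (viewed as a vertex set), $G(t)$ is the directed multigraph on $\Sigma$ with one edge $t_i\to t_{i+1}$ for each $1\le i<n$; a word $s=s_1\cdots s_k$ is an Eulerian trail of $G(t)$ if the multiset of pairs $\{(s_i,s_{i+1}):1\le i<k\}$ equals the multiset $\{(t_i,t_{i+1}):1\le i<n\}$. The language $L$ consists of the empty word $\epsilon$ together with all nonempty words $t$ such that no word $s\neq t$ with $s_1=t_1$ is an Eulerian trail of $G(t)$. A word $r$ is a minimal forbidden word of $L$ if $r\notin L$ while every proper factor (contiguous subword) of $r$ belongs to $L$. *)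

theory Defs
  imports Main "HOL-Library.Multiset" "HOL-Library.Sublist"
begin

text \<open>Edge multiset of the directed multigraph G(t): one edge (t_i, t_(i+1)) per i.\<close>
definition edges :: "'a list \<Rightarrow> ('a \<times> 'a) multiset" where
  "edges t = mset (zip t (tl t))"

definition eulerian_trail :: "'a list \<Rightarrow> 'a list \<Rightarrow> bool" where
  "eulerian_trail s t \<longleftrightarrow> edges s = edges t"

definition UET :: "'a list set" where
  "UET = {t. t = [] \<or>
     (\<forall>s. s \<noteq> [] \<and> hd s = hd t \<and> eulerian_trail s t \<longrightarrow> s = t)}"

definition min_forbidden :: "'a list set \<Rightarrow> 'a list set" where
  "min_forbidden L = {r. r \<notin> L \<and> (\<forall>u. sublist u r \<and> u \<noteq> r \<longrightarrow> u \<in> L)}"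

definition Lpp :: "'a list set" where
  "Lpp = {r.
     (\<exists>a b x y z. r = [a] @ x @ [b] @ z @ [a] @ y @ [b] \<and> a \<noteq> b \<and>
        (x \<noteq> [] \<or> y \<noteq> []) \<and> x \<in> UET \<and> y \<in> UET \<and> z \<in> UET \<and>
        a \<notin> set x \<and> a \<notin> set y \<and> a \<notin> set z \<and>
        b \<notin> set x \<and> b \<notin> set y \<and> b \<notin> set z \<and>
        set x \<inter> set y = {} \<and> set x \<inter> set z = {} \<and> set y \<inter> set z = {})
   \<or> (\<exists>a x y. r = [a] @ x @ [a] @ y @ [a] \<and>
        (x \<noteq> [] \<or> y \<noteq> []) \<and> x \<in> UET \<and> y \<in> UET \<and>
        a \<notin> set x \<and> a \<notin> set y \<and> set x \<inter> set y = {})}"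

end

theory Submission
  imports Defs
begin


lemma edges_Nil[simp]: "edges [] = {#}" by (simp add: edges_def)
lemma edges_single[simp]: "edges [x] = {#}" by (simp add: edges_def)
lemma edges_Cons2[simp]: "edges (x # y # ys) = add_mset (x,y) (edges (y # ys))"
  by (simp add: edges_def)
lemma edges_Cons: "xs \<noteq> [] \<Longrightarrow> edges (x # xs) = add_mset (x, hd xs) (edges xs)"
  by (cases xs) auto

lemma edges_append: "edges (xs @ y # ys) = edges (xs @ [y]) + edges (y # ys)"
proof (induction xs)
  case Nil then show ?case by simp
next
  case (Cons x xs) then show ?case by (cases xs) auto
qed

lemma edges_snoc: "xs \<noteq> [] \<Longrightarrow> edges (xs @ [y]) = add_mset (last xs, y) (edges xs)"
proof (induction xs)
  case Nil then show ?case by simp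
next
  case (Cons x xs) then show ?case by (cases xs) auto
qed

lemma fst_edges: "image_mset fst (edges xs) = mset (butlast xs)"
proof (induction xs)
  case Nil then show ?case by simp
next
  case (Cons x xs) then show ?case by (cases xs) auto
qed

lemma snd_edges: "image_mset snd (edges xs) = mset (tl xs)"
proof (induction xs)
  case Nil then show ?case by simp
next
  case (Cons x xs) then show ?case by (cases xs) auto
qed

lemma size_edges: "size (edges xs) = length xs - 1"
  by (simp add: edges_def)

lemma edge_src: "e \<in># edges xs \<Longrightarrow> fst e \<in> set (butlast xs)"
proof -
  assume "e \<in># edges xs"
  then have "fst e \<in># image_mset fst (edges xs)" by simp
  then show ?thesis by (simp add: fst_edges)
qed

lemma edge_tgt: "e \<in># edges xs \<Longrightarrow> snd e \<in> set (tl xs)"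
proof -
  assume "e \<in># edges xs"
  then have "snd e \<in># image_mset snd (edges xs)" by simp
  then show ?thesis by (simp add: snd_edges)
qed

lemma edges_rev: "edges (rev xs) = image_mset prod.swap (edges xs)"
proof (induction xs)
  case Nil then show ?case by simp
next
  case (Cons x xs)
  show ?case
  proof (cases xs)
    case Nil then show ?thesis by simp
  next
    case (Cons y ys)
    have "edges (rev (x # xs)) = edges (rev xs @ [x])" by simp
    also have "\<dots> = add_mset (last (rev xs), x) (edges (rev xs))"
      using Cons by (simp add: edges_snoc del: rev.simps)
    also have "\<dots> = image_mset prod.swap (edges (x # xs))"
      using Cons \<open>edges (rev xs) = _\<close> by (simp add: last_rev)
    finally show ?thesis .
  qed
qed

lemma UET_Nil[simp]: "[] \<in> UET" by (simp add: UET_def)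

lemma notUET: "t \<noteq> [] \<Longrightarrow> s \<noteq> [] \<Longrightarrow> hd s = hd t \<Longrightarrow> edges s = edges t \<Longrightarrow> s \<noteq> t \<Longrightarrow> t \<notin> UET"
  by (auto simp: UET_def eulerian_trail_def)

lemma UET_D: "t \<in> UET \<Longrightarrow> t \<noteq> [] \<Longrightarrow> s \<noteq> [] \<Longrightarrow> hd s = hd t \<Longrightarrow> edges s = edges t \<Longrightarrow> s = t"
  by (auto simp: UET_def eulerian_trail_def)

lemma UET_I: "(\<And>s. t \<noteq> [] \<Longrightarrow> s \<noteq> [] \<Longrightarrow> hd s = hd t \<Longrightarrow> edges s = edges t \<Longrightarrow> s = t) \<Longrightarrow> t \<in> UET"
  by (auto simp: UET_def eulerian_trail_def)

lemma len_eq: "s \<noteq> [] \<Longrightarrow> t \<noteq> [] \<Longrightarrow> edges s = edges t \<Longrightarrow> length s = length t"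
  by (metis size_edges length_greater_0_conv Suc_diff_1)

lemma mset_eq: "s \<noteq> [] \<Longrightarrow> t \<noteq> [] \<Longrightarrow> hd s = hd t \<Longrightarrow> edges s = edges t \<Longrightarrow> mset s = mset t"
proof -
  assume a: "s \<noteq> []" "t \<noteq> []" "hd s = hd t" "edges s = edges t"
  have "mset (tl s) = mset (tl t)" using a(4) snd_edges by metis
  moreover have "mset s = add_mset (hd s) (mset (tl s))" using a(1) by (cases s) auto
  moreover have "mset t = add_mset (hd t) (mset (tl t))" using a(2) by (cases t) auto
  ultimately show ?thesis using a(3) by simp
qed

lemma mset_snoc_last: "s \<noteq> [] \<Longrightarrow> mset s = add_mset (last s) (mset (butlast s))"
proof -
  assume "s \<noteq> []"
  then have "s = butlast s @ [last s]" by simp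
  then have "mset s = mset (butlast s @ [last s])" by simp
  then show ?thesis by simp
qed

lemma last_eq: "s \<noteq> [] \<Longrightarrow> t \<noteq> [] \<Longrightarrow> hd s = hd t \<Longrightarrow> edges s = edges t \<Longrightarrow> last s = last t"
proof -
  assume a: "s \<noteq> []" "t \<noteq> []" "hd s = hd t" "edges s = edges t"
  have m: "mset s = mset t" using mset_eq[OF a] .
  have "mset (butlast s) = mset (butlast t)" using a(4) fst_edges by metis
  then show ?thesis using m mset_snoc_last[OF a(1)] mset_snoc_last[OF a(2)] by simp
qed

lemma UET_single[simp]: "[x] \<in> UET"
proof (rule UET_I)
  fix s assume "s \<noteq> []" "hd s = hd [x]" "edges s = edges [x]"
  then have "length s = 1" using len_eq[of s "[x]"] by simp
  then show "s = [x]" using \<open>hd s = hd [x]\<close> by (cases s) auto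
qed



lemma closure_walk:
  assumes "\<And>u v. (u,v) \<in># edges xs \<Longrightarrow> u \<in> V \<Longrightarrow> v \<in> V" "xs \<noteq> []" "hd xs \<in> V"
  shows "set xs \<subseteq> V"
  using assms
proof (induction xs)
  case Nil then show ?case by simp
next
  case (Cons x xs)
  show ?case
  proof (cases xs)
    case Nil then show ?thesis using Cons.prems by simp
  next
    case (Cons y ys)
    have "(x, y) \<in># edges (x # xs)" using Cons by simp
    then have "y \<in> V" using Cons.prems by auto
    moreover have "\<And>u v. (u,v) \<in># edges xs \<Longrightarrow> u \<in> V \<Longrightarrow> v \<in> V"
      using Cons Cons.prems(1) by auto
    ultimately have "set xs \<subseteq> V" using Cons.IH Cons by simp
    then show ?thesis using Cons.prems by simp
  qed
qed

lemma UET_rev: "t \<in> UET \<Longrightarrow> rev t \<in> UET"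
proof (rule UET_I)
  fix s assume t: "t \<in> UET" and a: "rev t \<noteq> []" "s \<noteq> []" "hd s = hd (rev t)" "edges s = edges (rev t)"
  have tn: "t \<noteq> []" using a by simp
  have "last s = last (rev t)" using last_eq[OF a(2) a(1) a(3) a(4)] .
  then have h: "hd (rev s) = hd t" using a tn by (simp add: hd_rev last_rev)
  have "edges (rev s) = image_mset prod.swap (edges (rev t))" using a(4) by (simp add: edges_rev)
  also have "\<dots> = edges t" by (simp add: edges_rev multiset.map_comp comp_def)
  finally have "rev s = t" using UET_D[OF t tn _ h] a by simp
  then show "s = rev t" by auto
qed

lemma UET_rev_iff: "rev t \<in> UET \<longleftrightarrow> t \<in> UET"
  using UET_rev by fastforce

lemma UET_Cons:
  assumes t: "t \<in> UET" and c: "c \<notin> set (butlast t)"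
  shows "c # t \<in> UET"
proof (cases "t = []")
  case True then show ?thesis by simp
next
  case tn: False
  show ?thesis
  proof (rule UET_I)
    fix s assume a: "c # t \<noteq> []" "s \<noteq> []" "hd s = hd (c # t)" "edges s = edges (c # t)"
    have "length s = length (c # t)" using len_eq a by blast
    define s1 where "s1 = tl s"
    have s: "s = c # s1" using a s1_def by (cases s) auto
    have s1: "s1 \<noteq> []" using \<open>length s = length (c # t)\<close> tn s by auto
    have e: "add_mset (c, hd s1) (edges s1) = add_mset (c, hd t) (edges t)"
      using a(4) s s1 tn by (simp add: edges_Cons)
    have "hd s1 = hd t"
    proof (rule ccontr)
      assume "hd s1 \<noteq> hd t"
      then have "(c, hd s1) \<in># edges t" using e
        by (metis insert_noteq_member prod.inject)
      then show False using edge_src c by fastforce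
    qed
    then have "edges s1 = edges t" using e by simp
    then have "s1 = t" using UET_D[OF t tn s1] \<open>hd s1 = hd t\<close> by simp
    then show "s = c # t" using s by simp
  qed
qed

lemma UET_snoc:
  assumes t: "t \<in> UET" and c: "c \<notin> set t"
  shows "t @ [c] \<in> UET"
proof -
  have "rev t \<in> UET" using t UET_rev by blast
  moreover have "c \<notin> set (butlast (rev t))" using c using in_set_butlastD by fastforce
  ultimately have "c # rev t \<in> UET" by (rule UET_Cons)
  then have "rev (c # rev t) \<in> UET" by (rule UET_rev)
  then show ?thesis by simp
qed

lemma filter_all: "(\<And>x. x \<in># M \<Longrightarrow> P x) \<Longrightarrow> filter_mset P M = M"
  by (simp add: filter_mset_eq_conv)

lemma UET_concat:
  assumes A: "A @ [m] \<in> UET" and B: "m # B \<in> UET" and disj: "set A \<inter> set (m # B) = {}"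
  shows "A @ m # B \<in> UET"
proof (cases "A = []")
  case True then show ?thesis using B by simp
next
  case An: False
  show ?thesis
  proof (rule UET_I)
    fix s assume a: "A @ m # B \<noteq> []" "s \<noteq> []" "hd s = hd (A @ m # B)" "edges s = edges (A @ m # B)"
    have "mset s = mset (A @ m # B)" using mset_eq[OF a(2) a(1) a(3) a(4)] .
    then have "m \<in> set s" by (metis mset_eq_setD in_set_conv_decomp)
    moreover have "m \<notin> set A" using disj by auto
    ultimately have "\<exists>x\<in>set s. x \<notin> set A" by blast
    then obtain s1 x s2 where sp: "s = s1 @ x # s2" and x: "x \<notin> set A" and s1: "\<forall>y\<in>set s1. y \<in> set A"
      using split_list_first_prop[of s "\<lambda>x. x \<notin> set A"] by blast
    have hdA: "hd s \<in> set A" using a(3) An by simp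
    have s1n: "s1 \<noteq> []"
    proof
      assume "s1 = []" then have "hd s = x" using sp by simp
      then show False using hdA x by simp
    qed
    have et: "edges (A @ m # B) = add_mset (last A, m) (edges A) + edges (m # B)"
      using edges_append[of A m B] edges_snoc[OF An] by simp
    have es: "edges s = edges (s1 @ [x]) + edges (x # s2)" using sp edges_append by simp
    have "(last s1, x) \<in># edges (s1 @ [x])" using s1n by (simp add: edges_snoc)
    then have "(last s1, x) \<in># edges (A @ m # B)" using es a(4) by simp
    moreover have "last s1 \<in> set A" using s1 s1n by simp
    moreover have "\<And>e. e \<in># edges (m # B) \<Longrightarrow> fst e \<notin> set A"
      using disj edge_src by (metis disjoint_iff in_set_butlastD)
    moreover have "\<And>e. e \<in># edges A \<Longrightarrow> snd e \<in> set A"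
      using edge_tgt by (metis list.set_sel(2) list.sel(2) tl_Nil)
    ultimately have xm: "x = m" using et x by fastforce
    define V where "V = set (m # B)"
    have cl: "\<And>u v. (u,v) \<in># edges (x # s2) \<Longrightarrow> u \<in> V \<Longrightarrow> v \<in> V"
    proof -
      fix u v assume uv: "(u,v) \<in># edges (x # s2)" "u \<in> V"
      then have "(u,v) \<in># edges (A @ m # B)" using es a(4) by (metis union_iff)
      then have "(u,v) \<in># add_mset (last A, m) (edges A) \<or> (u,v) \<in># edges (m # B)" using et by simp
      moreover have "(u,v) \<notin># add_mset (last A, m) (edges A)"
      proof
        assume "(u,v) \<in># add_mset (last A, m) (edges A)"
        then have "(u,v) \<in># edges (A @ [m])" using edges_snoc[OF An] by simp
        then have "u \<in> set A" using edge_src by fastforce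
        then show False using uv(2) disj V_def by auto
      qed
      ultimately have "(u,v) \<in># edges (m # B)" by blast
      then have "v \<in> set B" using edge_tgt by fastforce
      then show "v \<in> V" using V_def by simp
    qed
    have s2V: "set (x # s2) \<subseteq> V" by (rule closure_walk[OF cl]) (auto simp: xm V_def)
    define F where "F = (\<lambda>M::('a\<times>'a) multiset. filter_mset (\<lambda>e. fst e \<in> set A) M)"
    define G where "G = (\<lambda>M::('a\<times>'a) multiset. filter_mset (\<lambda>e. fst e \<notin> set A) M)"
    have src1: "\<And>e. e \<in># edges (s1 @ [x]) \<Longrightarrow> fst e \<in> set A"
      using s1 edge_src by fastforce
    have src2: "\<And>e. e \<in># edges (x # s2) \<Longrightarrow> fst e \<notin> set A"
    proof -
      fix e assume "e \<in># edges (x # s2)"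
      then have "fst e \<in> set (x # s2)" using edge_src in_set_butlastD by fastforce
      then have "fst e \<in> V" using s2V by blast
      then show "fst e \<notin> set A" using disj V_def by blast
    qed
    have src3: "\<And>e. e \<in># edges (A @ [m]) \<Longrightarrow> fst e \<in> set A"
      using edge_src by fastforce
    have src4: "\<And>e. e \<in># edges (m # B) \<Longrightarrow> fst e \<notin> set A"
      using disj edge_src in_set_butlastD by fastforce
    have F1: "F (edges (s1 @ [x])) = edges (s1 @ [x])"
      unfolding F_def using src1 filter_all by metis
    have F2: "F (edges (x # s2)) = {#}"
      unfolding F_def using src2 by simp
    have F3: "F (edges (A @ [m])) = edges (A @ [m])"
      unfolding F_def using src3 filter_all by metis
    have F4: "F (edges (m # B)) = {#}"
      unfolding F_def using src4 by simp
    have G1: "G (edges (s1 @ [x])) = {#}"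
      unfolding G_def using src1 by simp
    have G2: "G (edges (x # s2)) = edges (x # s2)"
      unfolding G_def using src2 filter_all by metis
    have G3: "G (edges (A @ [m])) = {#}"
      unfolding G_def using src3 by simp
    have G4: "G (edges (m # B)) = edges (m # B)"
      unfolding G_def using src4 filter_all by metis
    have eAB: "edges (A @ m # B) = edges (A @ [m]) + edges (m # B)" by (rule edges_append)
    have "F (edges s) = F (edges (A @ m # B))" using a(4) by simp
    then have e1: "edges (s1 @ [x]) = edges (A @ [m])"
      using es eAB F1 F2 F3 F4 unfolding F_def by simp
    have "G (edges s) = G (edges (A @ m # B))" using a(4) by simp
    then have e2: "edges (x # s2) = edges (m # B)"
      using es eAB G1 G2 G3 G4 unfolding G_def by simp
    have "hd (s1 @ [x]) = hd (A @ [m])" using a(3) sp s1n An by simp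
    then have "s1 @ [x] = A @ [m]" using UET_D[OF A _ _ _ e1] by simp
    moreover have "x # s2 = m # B" using UET_D[OF B _ _ _ e2] xm by simp
    ultimately show "s = A @ m # B" using sp by simp
  qed
qed



lemma edges_mid: "w \<noteq> [] \<Longrightarrow> edges (u @ w @ v) = edges (u @ [hd w]) + edges w + edges (last w # v)"
proof -
  assume w: "w \<noteq> []"
  have 1: "edges (u @ hd w # (tl w @ v)) = edges (u @ [hd w]) + edges (hd w # (tl w @ v))"
    by (rule edges_append)
  have 2: "edges (butlast w @ last w # v) = edges (butlast w @ [last w]) + edges (last w # v)"
    by (rule edges_append)
  have e1: "u @ w @ v = u @ hd w # (tl w @ v)" using w by simp
  have e2: "hd w # (tl w @ v) = w @ v" using w by simp
  have e3: "w @ v = butlast w @ last w # v" using w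
    by (metis append.assoc append_Cons append_Nil append_butlast_last_id)
  have e4: "butlast w @ [last w] = w" using w by simp
  have "edges (u @ w @ v) = edges (u @ [hd w]) + edges (hd w # (tl w @ v))" unfolding e1 by (rule 1)
  also have "\<dots> = edges (u @ [hd w]) + edges (butlast w @ last w # v)" by (metis e2 e3)
  also have "\<dots> = edges (u @ [hd w]) + edges w + edges (last w # v)" using 2 e4 by (simp add: add.assoc)
  finally show ?thesis .
qed

lemma UET_factor:
  assumes t: "t \<in> UET" and su: "sublist w t"
  shows "w \<in> UET"
proof (rule ccontr)
  assume nw: "w \<notin> UET"
  then have wn: "w \<noteq> []" by auto
  from nw obtain w' where w': "w' \<noteq> []" "hd w' = hd w" "edges w' = edges w" "w' \<noteq> w"
    unfolding UET_def eulerian_trail_def by auto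
  from su obtain u v where tuv: "t = u @ w @ v" by (auto simp: sublist_def)
  have lw: "last w' = last w" using last_eq[OF w'(1) wn w'(2) w'(3)] .
  have len: "length w' = length w" using len_eq[OF w'(1) wn w'(3)] .
  have "edges (u @ w' @ v) = edges (u @ w @ v)"
    using edges_mid[OF wn, of u v] edges_mid[OF w'(1), of u v] w' lw by simp
  moreover have "hd (u @ w' @ v) = hd (u @ w @ v)" using w' wn by (cases u) auto
  moreover have "u @ w' @ v \<noteq> u @ w @ v" using len w'(4) by auto
  moreover have "u @ w' @ v \<noteq> []" using w' by simp
  ultimately have "t \<notin> UET" using notUET tuv by (metis Nil_is_append_conv wn)
  then show False using t by simp
qed

lemma proper_factor: "sublist u r \<Longrightarrow> u \<noteq> r \<Longrightarrow> sublist u (tl r) \<or> sublist u (butlast r)"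
proof -
  assume "sublist u r" "u \<noteq> r"
  then obtain p q where r: "r = p @ u @ q" by (auto simp: sublist_def)
  show ?thesis
  proof (cases p)
    case (Cons x p')
    then have "tl r = p' @ u @ q" using r by simp
    then show ?thesis by (auto simp: sublist_def)
  next
    case Nil
    then have "q \<noteq> []" using r \<open>u \<noteq> r\<close> by auto
    then have "butlast r = p @ u @ butlast q" using r by (simp add: butlast_append)
    then show ?thesis by (auto simp: sublist_def)
  qed
qed

lemma first_occ: "a \<notin> set x1 \<Longrightarrow> a \<notin> set x2 \<Longrightarrow> x1 @ a # y1 = x2 @ a # y2 \<Longrightarrow> x1 = x2 \<and> y1 = y2"
proof (induction x1 arbitrary: x2)
  case Nil then show ?case by (cases x2) auto
next
  case (Cons c x1) then show ?case by (cases x2) auto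
qed

lemma swapA: "edges (a # x @ b # z @ a # y @ [b]) = edges (a # y @ b # z @ a # x @ [b])"
proof -
  have "\<And>x y. edges (a # x @ b # z @ a # y @ [b]) = edges (a # x @ [b]) + edges (b # z @ [a]) + edges (a # y @ [b])"
  proof -
    fix x y
    have 1: "edges ((a # x) @ b # (z @ a # y @ [b])) = edges ((a#x) @ [b]) + edges (b # (z @ a # y @ [b]))"
      by (rule edges_append)
    have 2: "edges ((b # z) @ a # (y @ [b])) = edges ((b # z) @ [a]) + edges (a # y @ [b])"
      by (rule edges_append)
    show "edges (a # x @ b # z @ a # y @ [b]) = edges (a # x @ [b]) + edges (b # z @ [a]) + edges (a # y @ [b])"
      using 1 2 by (simp add: add.assoc)
  qed
  then show ?thesis by (simp add: ac_simps)
qed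

lemma swapB: "edges (a # x @ a # y @ [a]) = edges (a # y @ a # x @ [a])"
proof -
  have "\<And>x y. edges (a # x @ a # y @ [a]) = edges (a # x @ [a]) + edges (a # y @ [a])"
  proof -
    fix x y
    have 1: "edges ((a # x) @ a # (y @ [a])) = edges ((a#x) @ [a]) + edges (a # (y @ [a]))"
      by (rule edges_append)
    show "edges (a # x @ a # y @ [a]) = edges (a # x @ [a]) + edges (a # y @ [a])"
      using 1 by simp
  qed
  then show ?thesis by (simp add: ac_simps)
qed

lemma notUET_swapA: "a # x @ b # z @ a # y @ [b] \<noteq> a # y @ b # z @ a # x @ [b] \<Longrightarrow>
   a # x @ b # z @ a # y @ [b] \<notin> UET"
  by (rule notUET[OF _ _ _ swapA[of a y b z x]]) auto

lemma notUET_swapB: "a # x @ a # y @ [a] \<noteq> a # y @ a # x @ [a] \<Longrightarrow>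
   a # x @ a # y @ [a] \<notin> UET"
  by (rule notUET[OF _ _ _ swapB[of a y x]]) auto

lemma MF_I:
  assumes "r \<notin> UET" "tl r \<in> UET" "butlast r \<in> UET"
  shows "r \<in> min_forbidden UET"
  unfolding min_forbidden_def using assms proper_factor UET_factor by blast

lemma Lpp_a_MF:
  assumes ab: "a \<noteq> b" and ne: "x \<noteq> [] \<or> y \<noteq> []" and U: "x \<in> UET" "y \<in> UET" "z \<in> UET"
    and ni: "a \<notin> set x" "a \<notin> set y" "a \<notin> set z" "b \<notin> set x" "b \<notin> set y" "b \<notin> set z"
    and dj: "set x \<inter> set y = {}" "set x \<inter> set z = {}" "set y \<inter> set z = {}"
  shows "a # x @ b # z @ a # y @ [b] \<in> min_forbidden UET"
proof (rule MF_I)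
  show "a # x @ b # z @ a # y @ [b] \<notin> UET"
  proof (rule notUET_swapA)
    show "a # x @ b # z @ a # y @ [b] \<noteq> a # y @ b # z @ a # x @ [b]"
    proof
      assume "a # x @ b # z @ a # y @ [b] = a # y @ b # z @ a # x @ [b]"
      then have "x @ b # (z @ a # y @ [b]) = y @ b # (z @ a # x @ [b])" by simp
      then have "x = y" using first_occ[of b x y "z @ a # y @ [b]" "z @ a # x @ [b]"] ni by blast
      then show False using dj ne by auto
    qed
  qed
  have T_yb: "y @ [b] \<in> UET" using UET_snoc[OF U(2) ni(5)] .
  have T_ayb: "a # y @ [b] \<in> UET" using UET_Cons[OF T_yb] ni by simp
  have T_za: "z @ [a] \<in> UET" using UET_snoc[OF U(3) ni(3)] .
  have T2: "z @ a # (y @ [b]) \<in> UET" using UET_concat[OF T_za T_ayb] ni dj by auto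
  have T1: "b # z @ a # y @ [b] \<in> UET" using UET_Cons[OF T2] ni ab by (simp add: butlast_append)
  have T_xb: "x @ [b] \<in> UET" using UET_snoc[OF U(1) ni(4)] .
  have "x @ b # (z @ a # y @ [b]) \<in> UET" using UET_concat[OF T_xb T1] ni dj by auto
  then show "tl (a # x @ b # z @ a # y @ [b]) \<in> UET" by simp
  have R1: "rev x @ [a] \<in> UET" using UET_snoc[OF UET_rev[OF U(1)]] ni(1) by simp
  have R2: "b # rev x @ [a] \<in> UET" using UET_Cons[OF R1] ni by simp
  have R3: "rev z @ [b] \<in> UET" using UET_snoc[OF UET_rev[OF U(3)]] ni(6) by simp
  have R4: "rev z @ b # (rev x @ [a]) \<in> UET" using UET_concat[OF R3 R2] ni dj by auto
  have R5: "a # rev z @ b # rev x @ [a] \<in> UET" using UET_Cons[OF R4] ni ab by (simp add: butlast_append)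
  have R6: "rev y @ [a] \<in> UET" using UET_snoc[OF UET_rev[OF U(2)]] ni(2) by simp
  have R7: "rev y @ a # (rev z @ b # rev x @ [a]) \<in> UET" using UET_concat[OF R6 R5] ni dj ab by auto
  have "rev (rev y @ a # (rev z @ b # rev x @ [a])) = butlast (a # x @ b # z @ a # y @ [b])"
    by (simp add: butlast_append)
  then show "butlast (a # x @ b # z @ a # y @ [b]) \<in> UET" using R7 UET_rev by metis
qed

lemma Lpp_b_MF:
  assumes ne: "x \<noteq> [] \<or> y \<noteq> []" and U: "x \<in> UET" "y \<in> UET"
    and ni: "a \<notin> set x" "a \<notin> set y" and dj: "set x \<inter> set y = {}"
  shows "a # x @ a # y @ [a] \<in> min_forbidden UET"
proof (rule MF_I)
  show "a # x @ a # y @ [a] \<notin> UET"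
  proof (rule notUET_swapB)
    show "a # x @ a # y @ [a] \<noteq> a # y @ a # x @ [a]"
    proof
      assume "a # x @ a # y @ [a] = a # y @ a # x @ [a]"
      then have "x @ a # (y @ [a]) = y @ a # (x @ [a])" by simp
      then have "x = y" using first_occ[of a x y "y @ [a]" "x @ [a]"] ni by blast
      then show False using dj ne by auto
    qed
  qed
  have T_ya: "y @ [a] \<in> UET" using UET_snoc[OF U(2) ni(2)] .
  have T_aya: "a # y @ [a] \<in> UET" using UET_Cons[OF T_ya] ni by simp
  have T_xa: "x @ [a] \<in> UET" using UET_snoc[OF U(1) ni(1)] .
  have "x @ a # (y @ [a]) \<in> UET" using UET_concat[OF T_xa T_aya] ni dj by auto
  then show "tl (a # x @ a # y @ [a]) \<in> UET" by simp
  have R1: "rev x @ [a] \<in> UET" using UET_snoc[OF UET_rev[OF U(1)]] ni(1) by simp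
  have R2: "a # rev x @ [a] \<in> UET" using UET_Cons[OF R1] ni by simp
  have R6: "rev y @ [a] \<in> UET" using UET_snoc[OF UET_rev[OF U(2)]] ni(2) by simp
  have R7: "rev y @ a # (rev x @ [a]) \<in> UET" using UET_concat[OF R6 R2] ni dj by auto
  have "rev (rev y @ a # (rev x @ [a])) = butlast (a # x @ a # y @ [a])"
    by (simp add: butlast_append)
  then show "butlast (a # x @ a # y @ [a]) \<in> UET" using R7 UET_rev by metis
qed

lemma Lpp_sub_MF: "Lpp \<subseteq> min_forbidden UET"
proof
  fix r assume "r \<in> Lpp"
  then consider (A) a b x y z where "r = [a] @ x @ [b] @ z @ [a] @ y @ [b] \<and> a \<noteq> b \<and>
        (x \<noteq> [] \<or> y \<noteq> []) \<and> x \<in> UET \<and> y \<in> UET \<and> z \<in> UET \<and>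
        a \<notin> set x \<and> a \<notin> set y \<and> a \<notin> set z \<and>
        b \<notin> set x \<and> b \<notin> set y \<and> b \<notin> set z \<and>
        set x \<inter> set y = {} \<and> set x \<inter> set z = {} \<and> set y \<inter> set z = {}"
    | (B) a x y where "r = [a] @ x @ [a] @ y @ [a] \<and>
        (x \<noteq> [] \<or> y \<noteq> []) \<and> x \<in> UET \<and> y \<in> UET \<and>
        a \<notin> set x \<and> a \<notin> set y \<and> set x \<inter> set y = {}"
    unfolding Lpp_def by blast
  then show "r \<in> min_forbidden UET"
  proof cases
    case A then show ?thesis using Lpp_a_MF[of a b x y z] by simp
  next
    case B then show ?thesis using Lpp_b_MF[of x y a] by simp
  qed
qed



lemma edge_split: "(x,y) \<in># edges l \<Longrightarrow> \<exists>p q. l = p @ x # y # q"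
proof (induction l)
  case Nil then show ?case by simp
next
  case (Cons z l)
  show ?case
  proof (cases l)
    case Nil then show ?thesis using Cons by simp
  next
    case (Cons z' l')
    then have "(x,y) = (z,z') \<or> (x,y) \<in># edges l" using Cons.prems by auto
    then show ?thesis
    proof
      assume "(x,y) = (z,z')" then show ?thesis using Cons by auto
    next
      assume "(x,y) \<in># edges l"
      then obtain p q where "l = p @ x # y # q" using Cons.IH by blast
      then show ?thesis by (metis append_Cons)
    qed
  qed
qed

lemma MF_sub_Lpp:
  assumes mf: "r \<in> min_forbidden UET"
  shows "r \<in> Lpp"
proof -
  have rU: "r \<notin> UET" and pf0: "\<And>u. sublist u r \<Longrightarrow> u \<noteq> r \<Longrightarrow> u \<in> UET"
    using mf unfolding min_forbidden_def by auto
  have PF: "\<And>p u q. r = p @ u @ q \<Longrightarrow> p \<noteq> [] \<or> q \<noteq> [] \<Longrightarrow> u \<in> UET"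
  proof -
    fix p u q assume "r = p @ u @ q" "p \<noteq> [] \<or> q \<noteq> []"
    then have "length u < length r" by auto
    then have "u \<noteq> r" by auto
    moreover have "sublist u r" using \<open>r = p @ u @ q\<close> unfolding sublist_def by blast
    ultimately show "u \<in> UET" using pf0 by blast
  qed
  have rn: "r \<noteq> []" using rU by auto
  from rU obtain s where s: "s \<noteq> []" "hd s = hd r" "edges s = edges r" "s \<noteq> r"
    unfolding UET_def eulerian_trail_def by auto
  have lsr: "length s = length r" using len_eq[OF s(1) rn s(3)] .
  obtain a r1 where r: "r = a # r1" using rn by (cases r) auto
  obtain s1 where s1: "s = a # s1" using s(1,2) r by (cases s) auto
  have r1n: "r1 \<noteq> []"
  proof
    assume "r1 = []" then have "r = [a]" using r by simp
    then show False using rU by simp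
  qed
  have s1n: "s1 \<noteq> []" using lsr r s1 r1n by auto
  have r1U: "r1 \<in> UET" using PF[of "[a]" r1 "[]"] r by simp
  define c where "c = hd r1"
  define d where "d = hd s1"
  have er: "edges r = add_mset (a, c) (edges r1)" using r r1n c_def by (simp add: edges_Cons)
  have es: "edges s = add_mset (a, d) (edges s1)" using s1 s1n d_def by (simp add: edges_Cons)
  have cd: "c \<noteq> d"
  proof
    assume "c = d"
    then have "edges s1 = edges r1" using er es s(3) by simp
    then have "s1 = r1" using UET_D[OF r1U r1n s1n] c_def d_def \<open>c = d\<close> by simp
    then show False using s(4) r s1 by simp
  qed
  have "(a, d) \<in># edges r1" using er es s(3) cd
    by (metis insert_noteq_member prod.inject)
  then obtain P0 Q0 where "r1 = P0 @ a # d # Q0" using edge_split[of a d r1] by blast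
  then have "\<exists>n. \<exists>P Q. length P = n \<and> r1 = P @ a # d # Q" by blast
  then obtain n where n: "\<exists>P Q. length P = n \<and> r1 = P @ a # d # Q"
    and nmin: "\<And>m. m < n \<Longrightarrow> \<not> (\<exists>P Q. length P = m \<and> r1 = P @ a # d # Q)"
    using exists_least_iff[of "\<lambda>n. \<exists>P Q. length P = n \<and> r1 = P @ a # d # Q"] by blast
  then obtain C Q where CQ: "length C = n" "r1 = C @ a # d # Q" by blast
  have minC: "\<And>P' Q'. r1 = P' @ a # d # Q' \<Longrightarrow> length C \<le> length P'"
  proof -
    fix P' Q' assume h: "r1 = P' @ a # d # Q'"
    show "length C \<le> length P'"
    proof (rule ccontr)
      assume "\<not> length C \<le> length P'"
      then have "length P' < n" using CQ(1) by simp
      then show False using nmin[of "length P'"] h by blast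
    qed
  qed
  define D where "D = d # Q"
  have rCD: "r = a # C @ a # D" using r CQ D_def by simp
  have hC: "\<And>X. hd (C @ a # X) = c" using CQ(2) c_def by (cases C) auto
  have hD: "hd D = d" using D_def by simp
  have Dn: "D \<noteq> []" using D_def by simp
  show ?thesis
  proof (cases "a \<in> set D")
    case True
    then obtain D1 D2 where D12: "D = D1 @ a # D2" and aD1: "a \<notin> set D1"
      using split_list_first by metis
    have hD1: "\<And>X. hd (D1 @ a # X) = d" using hD D12 by (cases D1) auto
    have D2e: "D2 = []"
    proof (rule ccontr)
      assume "D2 \<noteq> []"
      then have f: "a # C @ a # D1 @ [a] \<in> UET" using PF[of "[]" _ D2] rCD D12 by simp
      have nq: "a # C @ a # D1 @ [a] \<noteq> a # D1 @ a # C @ [a]"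
        using hC[of "D1 @ [a]"] hD1[of "C @ [a]"] cd by (metis list.sel(3))
      show False using notUET_swapB[OF nq] f by simp
    qed
    have rB: "r = a # C @ a # D1 @ [a]" using rCD D12 D2e by simp
    have aC: "a \<notin> set C"
    proof
      assume "a \<in> set C"
      then obtain C1 C2 where C12: "C = C1 @ a # C2" by (meson split_list)
      have f: "a # C2 @ a # D1 @ [a] \<in> UET" using PF[of "a # C1" _ "[]"] rB C12 by simp
 have "hd (C2 @ a # D1 @ [a]) \<noteq> d"
      proof
        assume h: "hd (C2 @ a # D1 @ [a]) = d"
        have "r1 = C1 @ a # (C2 @ a # D)" using CQ(2) D_def C12 by simp
        also have "C2 @ a # D = d # tl (C2 @ a # D)" using h hD1 D12 D2e by (cases C2) auto
        finally have "length C \<le> length C1" using minC by blast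
        then show False using C12 by simp
      qed
      then have nq: "a # C2 @ a # D1 @ [a] \<noteq> a # D1 @ a # C2 @ [a]"
        using hD1[of "C2 @ [a]"] by (metis append.assoc append_Cons append_Nil list.sel(3))
      show False using notUET_swapB[OF nq] f by simp
    qed
    have dj: "set C \<inter> set D1 = {}"
    proof (rule ccontr)
      assume "set C \<inter> set D1 \<noteq> {}"
      then obtain e where e: "e \<in> set C" "e \<in> set D1" by blast
      obtain X1 X2 where X: "C = X1 @ e # X2" "e \<notin> set X1" using e split_list_first by metis
      obtain Y1 Y2 where Y: "D1 = Y1 @ e # Y2" "e \<notin> set Y1" using e split_list_first by metis
      have ea: "e \<noteq> a" using e aC by auto
      have f1: "e # X2 @ a # Y1 @ e # Y2 @ [a] \<in> UET"
        using PF[of "a # X1" _ "[]"] rB X Y by simp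
      have "X2 = Y2"
      proof (rule ccontr)
        assume "X2 \<noteq> Y2"
        have nq: "e # X2 @ a # Y1 @ e # Y2 @ [a] \<noteq> e # Y2 @ a # Y1 @ e # X2 @ [a]"
        proof
          assume "e # X2 @ a # Y1 @ e # Y2 @ [a] = e # Y2 @ a # Y1 @ e # X2 @ [a]"
          then have h: "X2 @ a # (Y1 @ e # Y2 @ [a]) = Y2 @ a # (Y1 @ e # X2 @ [a])" by simp
          have "a \<notin> set X2" "a \<notin> set Y2" using aC aD1 X Y by auto
          then have "X2 = Y2" using first_occ[OF _ _ h] by blast
          then show False using \<open>X2 \<noteq> Y2\<close> by simp
        qed
        show False using notUET_swapA[OF nq] f1 by simp
      qed
      have f2: "a # X1 @ e # X2 @ a # Y1 @ [e] \<in> UET"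
        using PF[of "[]" _ "Y2 @ [a]"] rB X Y by simp
      have "X1 = Y1"
      proof (rule ccontr)
        assume "X1 \<noteq> Y1"
        have nq: "a # X1 @ e # X2 @ a # Y1 @ [e] \<noteq> a # Y1 @ e # X2 @ a # X1 @ [e]"
        proof
          assume "a # X1 @ e # X2 @ a # Y1 @ [e] = a # Y1 @ e # X2 @ a # X1 @ [e]"
          then have h: "X1 @ e # (X2 @ a # Y1 @ [e]) = Y1 @ e # (X2 @ a # X1 @ [e])" by simp
          then have "X1 = Y1" using first_occ[OF _ _ h] X Y by blast
          then show False using \<open>X1 \<noteq> Y1\<close> by simp
        qed
        show False using notUET_swapA[OF nq] f2 by simp
      qed
      have "C = D1" using X Y \<open>X1 = Y1\<close> \<open>X2 = Y2\<close> by simp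
      then show False using hC[of "[]"] hD1[of "[]"] cd by simp
    qed
    have ne: "C \<noteq> [] \<or> D1 \<noteq> []"
      using hC[of "[]"] hD1[of "[]"] cd by auto
    have CU: "C \<in> UET" using PF[of "[a]" C "a # D1 @ [a]"] rB by simp
    have DU: "D1 \<in> UET" using PF[of "a # C @ [a]" D1 "[a]"] rB by simp
    show "r \<in> Lpp" unfolding Lpp_def mem_Collect_eq
      apply (rule disjI2)
      apply (rule exI[where x=a], rule exI[where x=C], rule exI[where x=D1])
      using rB ne CU DU aC aD1 dj by simp
  next
    case False
    note aD = False
    have ex: "\<exists>w. w \<in> set C \<and> w \<in> set D"
    proof (rule ccontr)
      assume nex: "\<not> (\<exists>w. w \<in> set C \<and> w \<in> set D)"
      define V where "V = set D"
      have erCD: "edges r = edges (a # C @ [a]) + add_mset (a, d) (edges D)"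
      proof -
        have "edges ((a # C) @ a # D) = edges ((a # C) @ [a]) + edges (a # D)" by (rule edges_append)
        moreover have "edges (a # D) = add_mset (a, d) (edges D)" using D_def by simp
        ultimately show ?thesis using rCD by simp
      qed
      have cl: "\<And>u v. (u,v) \<in># edges s1 \<Longrightarrow> u \<in> V \<Longrightarrow> v \<in> V"
      proof -
        fix u v assume uv: "(u,v) \<in># edges s1" "u \<in> V"
        then have "(u,v) \<in># edges r" using es s(3) by simp
        moreover have "(u,v) \<notin># edges (a # C @ [a])"
        proof
          assume h: "(u,v) \<in># edges (a # C @ [a])"
          have "fst (u,v) \<in> set (butlast (a # C @ [a]))" by (rule edge_src[OF h])
          then have "u \<in> set (a # C)" by (simp add: butlast_append)
          then show False using uv(2) V_def nex aD by auto
        qed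
        moreover have "(u,v) \<noteq> (a,d)" using uv(2) V_def aD by auto
        ultimately have "(u,v) \<in># edges D" using erCD by auto
        then have "v \<in> set (tl D)" using edge_tgt[of "(u,v)"] by simp
        then show "v \<in> V" using V_def D_def by simp
      qed
      have hdV: "hd s1 \<in> V" using d_def V_def D_def by simp
      have "set s1 \<subseteq> V"
      proof (rule closure_walk)
        show "\<And>u v. (u,v) \<in># edges s1 \<Longrightarrow> u \<in> V \<Longrightarrow> v \<in> V" by (rule cl)
      qed (use s1n hdV in auto)
      moreover have "(a, c) \<in># edges s1" using er es s(3) cd by (metis insert_noteq_member prod.inject)
      then have "a \<in> set s1" using edge_src[of "(a,c)" s1] in_set_butlastD by fastforce
      ultimately show False using aD V_def by auto
    qed
    have cl2: "\<And>w D1 D2. w \<in> set C \<Longrightarrow> D = D1 @ w # D2 \<Longrightarrow> D2 = []"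
    proof -
      fix w D1 D2 assume w: "w \<in> set C" "D = D1 @ w # D2"
      show "D2 = []"
      proof (rule ccontr)
        assume D2n: "D2 \<noteq> []"
        obtain C1 C2 where C12: "C = C1 @ w # C2" using w(1) split_list by metis
        have f: "a # C1 @ w # C2 @ a # D1 @ [w] \<in> UET"
          using PF[of "[]" _ D2] rCD C12 w(2) D2n by simp
        have nq: "a # C1 @ w # C2 @ a # D1 @ [w] \<noteq> a # D1 @ w # C2 @ a # C1 @ [w]"
        proof
          assume h: "a # C1 @ w # C2 @ a # D1 @ [w] = a # D1 @ w # C2 @ a # C1 @ [w]"
          have "hd (C1 @ w # C2 @ a # D1 @ [w]) = c" using hC[of D] C12 by (cases C1) auto
          moreover have "hd (D1 @ w # C2 @ a # C1 @ [w]) = d" using hD w(2) by (cases D1) auto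
          ultimately show False using h cd by (metis list.sel(3))
        qed
        show False using notUET_swapA[OF nq] f by simp
      qed
    qed
    obtain b where bC: "b \<in> set C" and bD: "b \<in> set D" using ex by blast
    obtain Y D2 where YD2: "D = Y @ b # D2" using bD split_list by metis
    have DY: "D = Y @ [b]" using YD2 cl2[OF bC YD2] by simp
    have ab: "a \<noteq> b" using bD aD by auto
    have aY: "a \<notin> set Y" using aD DY by simp
    have bY: "b \<notin> set Y"
    proof
      assume "b \<in> set Y"
      then obtain Y1 Y2 where "Y = Y1 @ b # Y2" using split_list by metis
      then have "D = Y1 @ b # (Y2 @ [b])" using DY by simp
      then show False using cl2[OF bC] by blast
    qed
    have CY: "set C \<inter> set Y = {}"
    proof (rule ccontr)
      assume "set C \<inter> set Y \<noteq> {}"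
      then obtain e where e: "e \<in> set C" "e \<in> set Y" by blast
      then obtain Y1 Y2 where "Y = Y1 @ e # Y2" using split_list by metis
      then have "D = Y1 @ e # (Y2 @ [b])" using DY by simp
      then show False using cl2[OF e(1)] by blast
    qed
    have rY: "r = a # C @ a # Y @ [b]" using rCD DY by simp
    have hY: "\<And>X. hd (Y @ b # X) = d" using hD DY by (cases Y) auto
    have c3a: "\<And>C1 C2. C = C1 @ a # C2 \<Longrightarrow> b \<notin> set C2"
    proof -
      fix C1 C2 assume C12: "C = C1 @ a # C2"
      show "b \<notin> set C2"
      proof
        assume "b \<in> set C2"
        then obtain Z1 Z2 where Z: "C2 = Z1 @ b # Z2" using split_list by metis
        have f: "a # Z1 @ b # Z2 @ a # Y @ [b] \<in> UET" using PF[of "a # C1" _ "[]"] rY C12 Z by simp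
        have "hd (Z1 @ b # Z2 @ a # Y @ [b]) \<noteq> d"
        proof
          assume h: "hd (Z1 @ b # Z2 @ a # Y @ [b]) = d"
          have "r1 = C1 @ a # (Z1 @ b # Z2 @ a # D)" using CQ(2) D_def C12 Z by simp
          also have "Z1 @ b # Z2 @ a # D = d # tl (Z1 @ b # Z2 @ a # D)" using h by (cases Z1) auto
          finally have "length C \<le> length C1" using minC by blast
          then show False using C12 by simp
        qed
        then have nq: "a # Z1 @ b # Z2 @ a # Y @ [b] \<noteq> a # Y @ b # Z2 @ a # Z1 @ [b]"
          using hY[of "Z2 @ a # Z1 @ [b]"] by (metis list.sel(3))
        show False using notUET_swapA[OF nq] f by simp
      qed
    qed
    have aC: "a \<notin> set C"
    proof
      assume "a \<in> set C"
      then obtain C1 C2 where C12: "C = C1 @ a # C2" and aC1: "a \<notin> set C1"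
        using split_list_first by metis
      have bC2: "b \<notin> set C2" using c3a[OF C12] .
      have bC1: "b \<in> set C1" using bC C12 bC2 ab by auto
      show False
      proof (cases "a \<in> set C2")
        case True
        then obtain V1 V2 where V: "C2 = V1 @ a # V2" "a \<notin> set V1" using split_list_first by metis
        have f: "a # C1 @ a # V1 @ [a] \<in> UET" using PF[of "[]" _ "V2 @ a # D"] rCD C12 V by simp
        have nq: "a # C1 @ a # V1 @ [a] \<noteq> a # V1 @ a # C1 @ [a]"
        proof
          assume "a # C1 @ a # V1 @ [a] = a # V1 @ a # C1 @ [a]"
          then have h: "C1 @ a # (V1 @ [a]) = V1 @ a # (C1 @ [a])" by simp
          then have "C1 = V1" using first_occ[OF aC1 V(2) h] by blast
          then show False using bC1 bC2 V by simp
        qed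
        show False using notUET_swapB[OF nq] f by simp
      next
        case False
        have f: "a # C1 @ a # C2 @ [a] \<in> UET" using PF[of "[]" _ D] rCD C12 Dn by simp
        have nq: "a # C1 @ a # C2 @ [a] \<noteq> a # C2 @ a # C1 @ [a]"
        proof
          assume "a # C1 @ a # C2 @ [a] = a # C2 @ a # C1 @ [a]"
          then have h: "C1 @ a # (C2 @ [a]) = C2 @ a # (C1 @ [a])" by simp
          then have "C1 = C2" using first_occ[OF aC1 False h] by blast
          then show False using bC1 bC2 by simp
        qed
        show False using notUET_swapB[OF nq] f by simp
      qed
    qed
    obtain X Z where XZ: "C = X @ b # Z" "b \<notin> set Z" using bC split_list_last by metis
    have bX: "b \<notin> set X"
    proof
      assume "b \<in> set X"
      then obtain X' R where XR: "X = X' @ b # R" "b \<notin> set R" using split_list_last by metis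
      have f: "b # R @ b # (Z @ a # Y) @ [b] \<in> UET" using PF[of "a # X'" _ "[]"] rY XZ XR by simp
      have nq: "b # R @ b # (Z @ a # Y) @ [b] \<noteq> b # (Z @ a # Y) @ b # R @ [b]"
      proof
        assume "b # R @ b # (Z @ a # Y) @ [b] = b # (Z @ a # Y) @ b # R @ [b]"
        then have h: "R @ b # ((Z @ a # Y) @ [b]) = (Z @ a # Y) @ b # (R @ [b])" by simp
        have "b \<notin> set (Z @ a # Y)" using XZ(2) ab bY by auto
        then have "R = Z @ a # Y" using first_occ[OF XR(2) _ h] by blast
        then have "a \<in> set C" using XZ XR by auto
        then show False using aC by simp
      qed
      show False using notUET_swapB[OF nq] f by simp
    qed
    have XZd: "set X \<inter> set Z = {}"
    proof (rule ccontr)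
      assume "set X \<inter> set Z \<noteq> {}"
      then obtain w where w: "w \<in> set X" "w \<in> set Z" by blast
      obtain X1 X2 where X: "X = X1 @ w # X2" using w(1) split_list by metis
      obtain Z1 Z2 where Z: "Z = Z1 @ w # Z2" using w(2) split_list by metis
      have f: "w # X2 @ b # Z1 @ w # (Z2 @ a # Y) @ [b] \<in> UET"
        using PF[of "a # X1" _ "[]"] rY XZ X Z by simp
      have nq: "w # X2 @ b # Z1 @ w # (Z2 @ a # Y) @ [b] \<noteq> w # (Z2 @ a # Y) @ b # Z1 @ w # X2 @ [b]"
      proof
        assume "w # X2 @ b # Z1 @ w # (Z2 @ a # Y) @ [b] = w # (Z2 @ a # Y) @ b # Z1 @ w # X2 @ [b]"
        then have h: "(X2 @ b # Z1 @ w # Z2) @ a # (Y @ [b]) = Z2 @ a # (Y @ b # Z1 @ w # X2 @ [b])" by simp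
        have "a \<notin> set (X2 @ b # Z1 @ w # Z2)" "a \<notin> set Z2" using aC XZ X Z ab by auto
        then have "X2 @ b # Z1 @ w # Z2 = Z2" using first_occ[OF _ _ h] by blast
        then have "length (X2 @ b # Z1 @ w # Z2) = length Z2" by simp
        then show False by simp
      qed
      show False using notUET_swapA[OF nq] f by simp
    qed
    have rF: "r = a # X @ b # Z @ a # Y @ [b]" using rY XZ by simp
    have XU: "X \<in> UET" using PF[of "[a]" X "b # Z @ a # Y @ [b]"] rF by simp
    have ZU: "Z \<in> UET" using PF[of "a # X @ [b]" Z "a # Y @ [b]"] rF by simp
    have YU: "Y \<in> UET" using PF[of "a # X @ b # Z @ [a]" Y "[b]"] rF by simp
    have ne: "X \<noteq> [] \<or> Y \<noteq> []"
    proof (rule ccontr)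
      assume "\<not> (X \<noteq> [] \<or> Y \<noteq> [])"
      then have "X = []" "Y = []" by auto
      then have "c = b" "d = b" using hC[of D] hY[of "[]"] XZ by auto
      then show False using cd by simp
    qed
    have dXY: "set X \<inter> set Y = {}" using CY XZ by auto
    have dZY: "set Y \<inter> set Z = {}" using CY XZ by auto
    have aXZ: "a \<notin> set X" "a \<notin> set Z" using aC XZ by auto
    show "r \<in> Lpp" unfolding Lpp_def mem_Collect_eq
      apply (rule disjI1)
      apply (rule exI[where x=a], rule exI[where x=b], rule exI[where x=X], rule exI[where x=Y], rule exI[where x=Z])
      using rF ab ne XU YU ZU aXZ aY bX XZ(2) bY dXY dZY XZd by simp
  qed
qed


theorem theorem1:
  shows "(Lpp :: ('a::finite) list set) = min_forbidden UET"
proof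
  show "Lpp \<subseteq> min_forbidden UET" by (rule Lpp_sub_MF)
  show "min_forbidden UET \<subseteq> Lpp" using MF_sub_Lpp by blast
qed

end
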